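(* For all integers $m\ge n\ge 2$, $\gamma^{DLD}(K_n\times K_m)=\gamma^{DLD}(K_n\square K_m)$.
   Context: $K_q$ is the complete graph on vertex set $\{1,\dots,q\}$. The Cartesian product $G_1\square G_2$ has vertex set $V_1\times V_2$, with $(u_1,u_2)$ adjacent to $(v_1,v_2)$ iff ($u_1=v_1$ and $u_2v_2\in E_2$) or ($u_2=v_2$ and $u_1v_1\in E_1$). The direct product $G_1\times G_2$ has vertex set $V_1\times V_2$, with $(u_1,u_2)$ adjacent to $(v_1,v_2)$ iff $u_1v_1\in E_1$ and $u_2v_2\in E_2$. For a code (nonempty vertex subset) $C$ and vertex $v$, $I(C;v)=N[v]\cap C$, where $N[v]$ is the closed neighbourhood. A code $C$ is solid-locating-dominating if for all distinct non-codewords $u,v$, $I(C;u)\setminus I(C;v)\ne\emptyset$. $\gamma^{DLD}(G)$ is the minimum size of a solid-locating-dominating code in the finite graph $G$. *)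

theory Defs
  imports Main
begin

type_synonym 'a graph = "'a set \<times> ('a \<Rightarrow> 'a \<Rightarrow> bool)"

definition verts :: "'a graph \<Rightarrow> 'a set" where "verts G = fst G"
definition adj :: "'a graph \<Rightarrow> 'a \<Rightarrow> 'a \<Rightarrow> bool" where "adj G = snd G"

definition complete_graph :: "nat \<Rightarrow> nat graph" where
  "complete_graph q = ({1..q}, \<lambda>u v. u \<in> {1..q} \<and> v \<in> {1..q} \<and> u \<noteq> v)"

definition cartesian_product :: "'a graph \<Rightarrow> 'b graph \<Rightarrow> ('a \<times> 'b) graph" where
  "cartesian_product G1 G2 = (verts G1 \<times> verts G2,
     \<lambda>(u1, u2) (v1, v2). (u1 = v1 \<and> adj G2 u2 v2) \<or> (u2 = v2 \<and> adj G1 u1 v1))"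

definition direct_product :: "'a graph \<Rightarrow> 'b graph \<Rightarrow> ('a \<times> 'b) graph" where
  "direct_product G1 G2 = (verts G1 \<times> verts G2,
     \<lambda>(u1, u2) (v1, v2). adj G1 u1 v1 \<and> adj G2 u2 v2)"

definition closed_nbhd :: "'a graph \<Rightarrow> 'a \<Rightarrow> 'a set" where
  "closed_nbhd G v = {u \<in> verts G. u = v \<or> adj G v u}"

definition I_set :: "'a graph \<Rightarrow> 'a set \<Rightarrow> 'a \<Rightarrow> 'a set" where
  "I_set G C v = closed_nbhd G v \<inter> C"

definition solid_locating_dominating :: "'a graph \<Rightarrow> 'a set \<Rightarrow> bool" where
  "solid_locating_dominating G C \<longleftrightarrow> C \<subseteq> verts G \<and> C \<noteq> {} \<and>
     (\<forall>u \<in> verts G - C. \<forall>v \<in> verts G - C. u \<noteq> v \<longrightarrow> I_set G C u - I_set G C v \<noteq> {})"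

definition gamma_DLD :: "'a graph \<Rightarrow> nat" where
  "gamma_DLD G = (LEAST k. \<exists>C. solid_locating_dominating G C \<and> card C = k)"

end

theory Submission
  imports Defs
begin

lemma key:
  fixes n m :: nat
  defines "D \<equiv> direct_product (complete_graph n) (complete_graph m)"
      and "K \<equiv> cartesian_product (complete_graph n) (complete_graph m)"
  assumes u: "u \<in> verts D - C" and v: "v \<in> verts D - C"
  shows "I_set D C u - I_set D C v = I_set K C v - I_set K C u"
  using u v
  by (cases u; cases v; auto simp: D_def K_def I_set_def closed_nbhd_def verts_def adj_def
      direct_product_def cartesian_product_def complete_graph_def)

lemma sld_eq:
  fixes n m :: nat
  shows "solid_locating_dominating (direct_product (complete_graph n) (complete_graph m)) C
       = solid_locating_dominating (cartesian_product (complete_graph n) (complete_graph m)) C"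
proof -
  have V: "verts (direct_product (complete_graph n) (complete_graph m))
         = verts (cartesian_product (complete_graph n) (complete_graph m))"
    by (simp add: verts_def direct_product_def cartesian_product_def)
  show ?thesis
    unfolding solid_locating_dominating_def V[symmetric]
    using key[of _ n m C] V by metis
qed

theorem theorem17:
  fixes n m :: nat
  assumes "2 \<le> n" and "n \<le> m"
  shows "gamma_DLD (direct_product (complete_graph n) (complete_graph m))
       = gamma_DLD (cartesian_product (complete_graph n) (complete_graph m))"
  unfolding gamma_DLD_def sld_eq ..

end
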